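(* Let $I$ be a real interval with $[-1,0]\subseteq I\subseteq\mathbb{R}_-$ and let $f\colon I^n\to\mathbb{R}$ be nonconstant. The following are equivalent: (i) $f$ is a quasi-Lovász extension and there exists $A\subseteq[n]$ with $f_0(-\mathbf{1}_A)\neq0$; (ii) $f$ is comonotonically modular and $f_0$ is weakly homogeneous; (ii') $f$ is invariant under horizontal max-differences and $f_0$ is weakly homogeneous; (iii) there exists a nondecreasing function $\varphi_f\colon I\to\mathbb{R}$ with $\varphi_f(0)=0$ and $\varphi_f(-1)=-1$ such that $f=L^-_f\circ\varphi_f$, i.e. $f(\mathbf{x})=L^-_f(\varphi_f(x_1),\ldots,\varphi_f(x_n))$ for all $\mathbf{x}\in I^n$, where $L^-_f$ denotes the unique Lovász extension $L\colon\mathbb{R}^n\to\mathbb{R}$ satisfying $L(-\mathbf{1}_A)=f(-\mathbf{1}_A)$ for all $A\subseteq[n]$.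
   Context: Notation: $[n]=\{1,\ldots,n\}$; $S_n$ the permutations of $[n]$; $\mathbf{1}_A$ is the indicator tuple of $A\subseteq[n]$, $\mathbf{0}=\mathbf{1}_\varnothing$; for a function $g$, $g_0=g-g(\mathbf{0})$. For $\sigma\in S_n$, $\mathbb{R}^n_\sigma=\{\mathbf{x}: x_{\sigma(1)}\leq\cdots\leq x_{\sigma(n)}\}$, $A^\uparrow_\sigma(i)=\{\sigma(i),\ldots,\sigma(n)\}$, $A^\uparrow_\sigma(n+1)=\varnothing$. The Lovász extension $L_\psi\colon\mathbb{R}^n\to\mathbb{R}$ of $\psi\colon\{0,1\}^n\to\mathbb{R}$ is the function whose restriction to each $\mathbb{R}^n_\sigma$ is the unique affine function agreeing with $\psi$ at the points $\mathbf{1}_{A^\uparrow_\sigma(k)}$, $k\in[n+1]$; a Lovász extension is any such $L_\psi$ (a Lovász extension is uniquely determined by, and can be prescribed arbitrarily through, its values at the points $-\mathbf{1}_A$, $A\subseteq[n]$). A quasi-Lovász extension is $f(\mathbf{x})=L(\varphi(x_1),\ldots,\varphi(x_n))$ with $L$ a Lovász extension and $\varphi\colon I\to\mathbb{R}$ nondecreasing, $\varphi(0)=0$. Comonotonic: $\mathbf{x},\mathbf{x}'\in I^n\cap\mathbb{R}^n_\sigma$ for some $\sigma$. Comonotonically modular: $f(\mathbf{x})+f(\mathbf{x}')=f(\mathbf{x}\wedge\mathbf{x}')+f(\mathbf{x}\vee\mathbf{x}')$ for comonotonic $\mathbf{x},\mathbf{x}'$ ($\wedge,\vee$ componentwise).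 For $c\leq0$, $[\mathbf{x}]^c$ has $i$th component $0$ if $x_i\geq c$ and $x_i$ otherwise, and $\mathbf{x}\vee c$ has components $\max(x_i,c)$; $f$ is invariant under horizontal max-differences if $f(\mathbf{x})-f(\mathbf{x}\vee c)=f([\mathbf{x}]^c)-f([\mathbf{x}]^c\vee c)$ for all $\mathbf{x}\in I^n$, $c\in I$. A function $g\colon I^n\to\mathbb{R}$ ($I\subseteq\mathbb{R}_-$) is weakly homogeneous if there is a nondecreasing $\phi\colon I\to\mathbb{R}$ with $\phi(0)=0$ and $g(x\mathbf{1}_A)=-\phi(x)g(-\mathbf{1}_A)$ for all $x\in I$, $A\subseteq[n]$. *)

theory Defs
  imports "HOL-Analysis.Analysis"
begin

text \<open>Points of R^n are functions 'n => real for a finite index type 'n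
 (n = CARD('n)); subsets A of [n] are sets of type 'n set; a pseudo-Boolean
 function psi on {0,1}^n is represented as a set function psi :: 'n set => real,
 psi(1_A) = psi A.\<close>

definition ind :: "'n set \<Rightarrow> ('n \<Rightarrow> real)" where
  "ind A = (\<lambda>i. if i \<in> A then 1 else 0)"

definition cube :: "real set \<Rightarrow> ('n \<Rightarrow> real) set" where
  "cube I = {x. \<forall>i. x i \<in> I}"

definition is_perm :: "(nat \<Rightarrow> 'n::finite) \<Rightarrow> bool" where
  "is_perm \<sigma> \<longleftrightarrow> bij_betw \<sigma> {1..CARD('n)} UNIV"

definition in_sector :: "(nat \<Rightarrow> 'n::finite) \<Rightarrow> ('n \<Rightarrow> real) \<Rightarrow> bool" where
  "in_sector \<sigma> x \<longleftrightarrow> (\<forall>i j. 1 \<le> i \<longrightarrow> i \<le> j \<longrightarrow> j \<le> CARD('n) \<longrightarrow> x (\<sigma> i) \<le> x (\<sigma> j))"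

definition A_up :: "(nat \<Rightarrow> 'n::finite) \<Rightarrow> nat \<Rightarrow> 'n set" where
  "A_up \<sigma> i = \<sigma> ` {i..CARD('n)}"

definition lovasz_ext_of :: "('n::finite set \<Rightarrow> real) \<Rightarrow> (('n \<Rightarrow> real) \<Rightarrow> real) \<Rightarrow> bool" where
  "lovasz_ext_of \<psi> L \<longleftrightarrow>
     (\<forall>\<sigma>. is_perm \<sigma> \<longrightarrow>
        (\<exists>(c::real) (a::'n \<Rightarrow> real).
           (\<forall>k\<in>{1..CARD('n)+1}. c + (\<Sum>i\<in>UNIV. a i * ind (A_up \<sigma> k) i) = \<psi> (A_up \<sigma> k)) \<and>
           (\<forall>x. in_sector \<sigma> x \<longrightarrow> L x = c + (\<Sum>i\<in>UNIV. a i * x i))))"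

definition is_lovasz :: "(('n::finite \<Rightarrow> real) \<Rightarrow> real) \<Rightarrow> bool" where
  "is_lovasz L \<longleftrightarrow> (\<exists>\<psi>. lovasz_ext_of \<psi> L)"

definition lovasz_minus :: "(('n::finite \<Rightarrow> real) \<Rightarrow> real) \<Rightarrow> (('n \<Rightarrow> real) \<Rightarrow> real)" where
  "lovasz_minus f = (THE L. is_lovasz L \<and> (\<forall>A. L (- ind A) = f (- ind A)))"

definition quasi_lovasz :: "real set \<Rightarrow> (('n::finite \<Rightarrow> real) \<Rightarrow> real) \<Rightarrow> bool" where
  "quasi_lovasz I f \<longleftrightarrow> (\<exists>L \<phi>. is_lovasz L \<and> mono_on I \<phi> \<and> \<phi> 0 = 0 \<and>
      (\<forall>x\<in>cube I. f x = L (\<lambda>i. \<phi> (x i))))"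

definition f0 :: "(('n \<Rightarrow> real) \<Rightarrow> real) \<Rightarrow> (('n \<Rightarrow> real) \<Rightarrow> real)" where
  "f0 f = (\<lambda>x. f x - f (\<lambda>_. 0))"

definition comonotonic :: "real set \<Rightarrow> ('n::finite \<Rightarrow> real) \<Rightarrow> ('n \<Rightarrow> real) \<Rightarrow> bool" where
  "comonotonic I x x' \<longleftrightarrow> x \<in> cube I \<and> x' \<in> cube I \<and>
      (\<exists>\<sigma>. is_perm \<sigma> \<and> in_sector \<sigma> x \<and> in_sector \<sigma> x')"

definition comon_modular :: "real set \<Rightarrow> (('n::finite \<Rightarrow> real) \<Rightarrow> real) \<Rightarrow> bool" where
  "comon_modular I f \<longleftrightarrow> (\<forall>x x'. comonotonic I x x' \<longrightarrow>
      f x + f x' = f (\<lambda>i. min (x i) (x' i)) + f (\<lambda>i. max (x i) (x' i)))"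

definition cutc :: "real \<Rightarrow> ('n \<Rightarrow> real) \<Rightarrow> ('n \<Rightarrow> real)" where
  "cutc c x = (\<lambda>i. if x i \<ge> c then 0 else x i)"

definition maxc :: "('n \<Rightarrow> real) \<Rightarrow> real \<Rightarrow> ('n \<Rightarrow> real)" where
  "maxc x c = (\<lambda>i. max (x i) c)"

definition inv_hmaxdiff :: "real set \<Rightarrow> (('n \<Rightarrow> real) \<Rightarrow> real) \<Rightarrow> bool" where
  "inv_hmaxdiff I f \<longleftrightarrow> (\<forall>x\<in>cube I. \<forall>c\<in>I.
      f x - f (maxc x c) = f (cutc c x) - f (maxc (cutc c x) c))"

definition weakly_homogeneous :: "real set \<Rightarrow> (('n \<Rightarrow> real) \<Rightarrow> real) \<Rightarrow> bool" where
  "weakly_homogeneous I g \<longleftrightarrow> (\<exists>\<phi>. mono_on I \<phi> \<and> \<phi> 0 = 0 \<and>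
      (\<forall>x\<in>I. \<forall>A. g (\<lambda>i. x * ind A i) = - \<phi> x * g (- ind A)))"

end

theory Submission imports Defs begin

lemma perm_inj: "is_perm (\<sigma>::nat \<Rightarrow> 'n::finite) \<Longrightarrow> inj_on \<sigma> {1..CARD('n)}"
  unfolding is_perm_def bij_betw_def by simp

lemma perm_surj: "is_perm (\<sigma>::nat \<Rightarrow> 'n::finite) \<Longrightarrow> \<sigma> ` {1..CARD('n)} = UNIV"
  unfolding is_perm_def bij_betw_def by simp

lemma sort_exists: "\<exists>\<sigma>. is_perm (\<sigma>::nat \<Rightarrow> 'n::finite) \<and> in_sector \<sigma> x"
proof -
  obtain e where e: "bij_betw e {0..<CARD('n)} (UNIV::'n set)"
    using ex_bij_betw_nat_finite[of "UNIV::'n set"] by auto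
  define xs where "xs = map e [0..<CARD('n)]"
  have dxs: "distinct xs" using e unfolding xs_def bij_betw_def
    by (simp add: distinct_map)
  have sxs: "set xs = UNIV" using e unfolding xs_def bij_betw_def by simp
  define ys where "ys = sort_key x xs"
  have dys: "distinct ys" using dxs unfolding ys_def by simp
  have sys: "set ys = UNIV" using sxs unfolding ys_def by simp
  have lys: "length ys = CARD('n)" unfolding ys_def xs_def by simp
  have sorted: "sorted (map x ys)" unfolding ys_def by simp
  define \<sigma> where "\<sigma> = (\<lambda>i. ys ! (i - 1))"
  have b1: "bij_betw ((!) ys) {..<CARD('n)} UNIV"
    by (rule bij_betw_nth[OF dys]) (use lys sys in auto)
  have b2: "bij_betw (\<lambda>i::nat. i - 1) {1..CARD('n)} {..<CARD('n)}"
    by (rule bij_betw_byWitness[where f'="\<lambda>i. i + 1"]) auto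
  have "is_perm \<sigma>" unfolding is_perm_def \<sigma>_def
    using bij_betw_trans[OF b2 b1] by (simp add: comp_def)
  moreover have "in_sector \<sigma> x"
    unfolding in_sector_def \<sigma>_def
  proof (intro allI impI)
    fix i j :: nat assume "1 \<le> i" "i \<le> j" "j \<le> CARD('n)"
    then have "map x ys ! (i - 1) \<le> map x ys ! (j - 1)"
      by (intro sorted_nth_mono[OF sorted]) (auto simp: lys)
    then show "x (ys ! (i - 1)) \<le> x (ys ! (j - 1))"
      using \<open>1 \<le> i\<close> \<open>i \<le> j\<close> \<open>j \<le> CARD('n)\<close> lys by simp
  qed
  ultimately show ?thesis by blast
qed

definition Bd :: "(nat \<Rightarrow> 'n::finite) \<Rightarrow> nat \<Rightarrow> 'n set" where
  "Bd \<sigma> k = \<sigma> ` {1..k}"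

lemma perm_mem_image:
  assumes "is_perm (\<sigma>::nat \<Rightarrow> 'n::finite)" "S \<subseteq> {1..CARD('n)}" "l \<in> {1..CARD('n)}"
  shows "\<sigma> l \<in> \<sigma> ` S \<longleftrightarrow> l \<in> S"
  using perm_inj[OF assms(1)] assms(2,3) by (meson inj_on_image_mem_iff)

lemma ind_Bd:
  assumes "is_perm (\<sigma>::nat \<Rightarrow> 'n::finite)" "k \<le> CARD('n)" "1 \<le> l" "l \<le> CARD('n)"
  shows "ind (Bd \<sigma> k) (\<sigma> l) = (if l \<le> k then 1 else 0)"
  using perm_mem_image[OF assms(1), of "{1..k}" l] assms unfolding ind_def Bd_def by auto

lemma sector_negBd:
  assumes "is_perm (\<sigma>::nat \<Rightarrow> 'n::finite)" "k \<le> CARD('n)"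
  shows "in_sector \<sigma> (- ind (Bd \<sigma> k))"
  unfolding in_sector_def using ind_Bd[OF assms] by auto

lemma sector_ind_Aup:
  assumes "is_perm (\<sigma>::nat \<Rightarrow> 'n::finite)" "1 \<le> k"
  shows "in_sector \<sigma> (ind (A_up \<sigma> k))"
  unfolding in_sector_def
proof (intro allI impI)
  fix i j assume h: "1 \<le> i" "i \<le> j" "j \<le> CARD('n)"
  have "\<sigma> i \<in> A_up \<sigma> k \<longleftrightarrow> i \<in> {k..CARD('n)}"
    unfolding A_up_def by (rule perm_mem_image[OF assms(1)]) (use h assms(2) in auto)
  moreover have "\<sigma> j \<in> A_up \<sigma> k \<longleftrightarrow> j \<in> {k..CARD('n)}"
    unfolding A_up_def by (rule perm_mem_image[OF assms(1)]) (use h assms(2) in auto)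
  ultimately show "ind (A_up \<sigma> k) (\<sigma> i) \<le> ind (A_up \<sigma> k) (\<sigma> j)"
    using h unfolding ind_def by auto
qed

definition sector_affine :: "(('n::finite \<Rightarrow> real) \<Rightarrow> real) \<Rightarrow> bool" where
  "sector_affine L \<longleftrightarrow> (\<forall>\<sigma>. is_perm \<sigma> \<longrightarrow>
     (\<exists>(c::real) (a::'n \<Rightarrow> real). \<forall>x. in_sector \<sigma> x \<longrightarrow> L x = c + (\<Sum>i\<in>UNIV. a i * x i)))"

lemma is_lovasz_iff: "is_lovasz L \<longleftrightarrow> sector_affine L"
proof
  assume "is_lovasz L" then show "sector_affine L"
    unfolding is_lovasz_def lovasz_ext_of_def sector_affine_def by meson
next
  assume sa: "sector_affine L"
  have "lovasz_ext_of (\<lambda>B. L (ind B)) L"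
    unfolding lovasz_ext_of_def
  proof (intro allI impI)
    fix \<sigma> :: "nat \<Rightarrow> 'a" assume p: "is_perm \<sigma>"
    then obtain c a where ca: "\<forall>x. in_sector \<sigma> x \<longrightarrow> L x = c + (\<Sum>i\<in>UNIV. a i * x i)"
      using sa unfolding sector_affine_def by blast
    show "\<exists>c a. (\<forall>k\<in>{1..CARD('a) + 1}. c + (\<Sum>i\<in>UNIV. a i * ind (A_up \<sigma> k) i) = L (ind (A_up \<sigma> k))) \<and>
             (\<forall>x. in_sector \<sigma> x \<longrightarrow> L x = c + (\<Sum>i\<in>UNIV. a i * x i))"
      using ca sector_ind_Aup[OF p] by (metis atLeastAtMost_iff)
  qed
  then show "is_lovasz L" unfolding is_lovasz_def by blast
qed


lemma zero_sector: "in_sector \<sigma> (\<lambda>_. 0)" unfolding in_sector_def by simp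

lemma neg_ind_empty: "- ind {} = (\<lambda>_. 0::real)"
  by (rule ext) (simp add: ind_def)

lemma sum_neg_ind: "(\<Sum>i\<in>UNIV. a i * (- ind B i)) = - (\<Sum>i\<in>(B::'n::finite set). a i)"
proof -
  have "(\<Sum>i\<in>UNIV. a i * (- ind B i)) = (\<Sum>i\<in>UNIV. - (if i \<in> B then a i else 0))"
    by (rule sum.cong) (auto simp: ind_def)
  also have "\<dots> = - (\<Sum>i\<in>B. a i)"
    using sum.inter_restrict[of UNIV a B] by (simp add: sum_negf)
  finally show ?thesis .
qed

lemma sum_ind: "(\<Sum>i\<in>UNIV. a i * (t * ind B i)) = t * (\<Sum>i\<in>(B::'n::finite set). a i)"
proof -
  have "(\<Sum>i\<in>UNIV. a i * (t * ind B i)) = (\<Sum>i\<in>UNIV. t * (if i \<in> B then a i else 0))"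
    by (rule sum.cong) (auto simp: ind_def)
  also have "\<dots> = t * (\<Sum>i\<in>B. a i)"
    using sum.inter_restrict[of UNIV a B] by (simp add: sum_distrib_left[symmetric])
  finally show ?thesis .
qed

lemma RL:
  fixes L :: "('n::finite \<Rightarrow> real) \<Rightarrow> real"
  assumes sa: "sector_affine L" and p: "is_perm \<sigma>" and y: "in_sector \<sigma> y"
  shows "L y = L (\<lambda>_. 0) - (\<Sum>l=1..CARD('n). (L (- ind (Bd \<sigma> l)) - L (- ind (Bd \<sigma> (l - 1)))) * y (\<sigma> l))"
proof -
  obtain c a where ca: "\<forall>x. in_sector \<sigma> x \<longrightarrow> L x = c + (\<Sum>i\<in>UNIV. a i * x i)"
    using sa p unfolding sector_affine_def by blast
  have L0: "L (\<lambda>_. 0) = c" using ca zero_sector[of \<sigma>] by simp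
  have Bk: "L (- ind (Bd \<sigma> k)) = c - (\<Sum>l=1..k. a (\<sigma> l))" if "k \<le> CARD('n)" for k
  proof -
    have "L (- ind (Bd \<sigma> k)) = c + (\<Sum>i\<in>UNIV. a i * (- ind (Bd \<sigma> k)) i)"
      using ca sector_negBd[OF p that] by blast
    also have "\<dots> = c - (\<Sum>i\<in>Bd \<sigma> k. a i)" using sum_neg_ind[of a] by simp
    also have "(\<Sum>i\<in>Bd \<sigma> k. a i) = (\<Sum>l=1..k. a (\<sigma> l))"
      unfolding Bd_def
      by (rule sum.reindex_cong[where l=\<sigma>]) (use perm_inj[OF p] that in \<open>auto intro: inj_on_subset\<close>)
    finally show ?thesis .
  qed
  have D: "L (- ind (Bd \<sigma> l)) - L (- ind (Bd \<sigma> (l - 1))) = - a (\<sigma> l)"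
    if lin: "l \<in> {1..CARD('n)}" for l
  proof -
    obtain k where k: "l = Suc k" using lin by (cases l) auto
    show ?thesis using Bk[of l] Bk[of "l - 1"] lin k by simp
  qed
  have "(\<Sum>i\<in>UNIV. a i * y i) = (\<Sum>i\<in>\<sigma> ` {1..CARD('n)}. a i * y i)"
    using perm_surj[OF p] by simp
  also have "\<dots> = (\<Sum>l=1..CARD('n). a (\<sigma> l) * y (\<sigma> l))"
    by (rule sum.reindex_cong[where l=\<sigma>]) (use perm_inj[OF p] in auto)
  also have "\<dots> = (\<Sum>l=1..CARD('n). - ((L (- ind (Bd \<sigma> l)) - L (- ind (Bd \<sigma> (l - 1)))) * y (\<sigma> l)))"
  proof (rule sum.cong[OF refl])
    fix l assume "l \<in> {1..CARD('n)}"
    then show "a (\<sigma> l) * y (\<sigma> l) = - ((L (- ind (Bd \<sigma> l)) - L (- ind (Bd \<sigma> (l - 1)))) * y (\<sigma> l))"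
      using D[of l] by simp
  qed
  also have "\<dots> = - (\<Sum>l=1..CARD('n). (L (- ind (Bd \<sigma> l)) - L (- ind (Bd \<sigma> (l - 1)))) * y (\<sigma> l))"
    by (simp add: sum_negf)
  finally show ?thesis using ca y L0 by simp
qed

lemma LH:
  fixes L :: "('n::finite \<Rightarrow> real) \<Rightarrow> real"
  assumes sa: "sector_affine L" and t: "t \<le> 0"
  shows "L (\<lambda>i. t * ind A i) = L (\<lambda>_. 0) - t * (L (- ind A) - L (\<lambda>_. 0))"
proof -
  obtain \<sigma> where p: "is_perm \<sigma>" and s: "in_sector \<sigma> (- ind A)"
    using sort_exists by blast
  obtain c a where ca: "\<forall>x. in_sector \<sigma> x \<longrightarrow> L x = c + (\<Sum>i\<in>UNIV. a i * x i)"
    using sa p unfolding sector_affine_def by blast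
  have s2: "in_sector \<sigma> (\<lambda>i. t * ind A i)"
    unfolding in_sector_def
  proof (intro allI impI)
    fix i j assume "1 \<le> i" "i \<le> j" "j \<le> CARD('n)"
    then have "- ind A (\<sigma> i) \<le> - ind A (\<sigma> j)" using s unfolding in_sector_def by auto
    then have "(- t) * (- ind A (\<sigma> i)) \<le> (- t) * (- ind A (\<sigma> j))"
      by (rule mult_left_mono) (use t in simp)
    then show "t * ind A (\<sigma> i) \<le> t * ind A (\<sigma> j)" by simp
  qed
  have "L (\<lambda>i. t * ind A i) = c + t * (\<Sum>i\<in>A. a i)" using ca s2 sum_ind[of a t A] by simp
  moreover have "L (- ind A) = c - (\<Sum>i\<in>A. a i)" using ca s sum_neg_ind[of a A] by simp
  moreover have "L (\<lambda>_. 0) = c" using ca zero_sector[of \<sigma>] by simp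
  ultimately show ?thesis by simp
qed

lemma lovasz_unique:
  fixes L1 L2 :: "('n::finite \<Rightarrow> real) \<Rightarrow> real"
  assumes "sector_affine L1" "sector_affine L2" "\<forall>A. L1 (- ind A) = L2 (- ind A)"
  shows "L1 = L2"
proof
  fix x :: "'n \<Rightarrow> real"
  obtain \<sigma> where p: "is_perm \<sigma>" and s: "in_sector \<sigma> x" using sort_exists by blast
  have "L1 (\<lambda>_. 0) = L2 (\<lambda>_. 0)" using assms(3)[rule_format, of "{}"] by (simp add: neg_ind_empty)
  then show "L1 x = L2 x" using RL[OF assms(1) p s] RL[OF assms(2) p s] assms(3) by simp
qed


lemma mobius_exists:
  fixes h :: "'n::finite set \<Rightarrow> real"
  shows "\<exists>m. \<forall>B. (\<Sum>A\<in>Pow B. m A) = h B"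
proof -
  define G where "G S = (\<Sum>T\<in>Pow S. (-1) ^ card T * h T)" for S
  define m where "m A = (-1) ^ card A * G A" for A
  have "h B = (\<Sum>T\<in>Pow B. (-1) ^ card T * G T)" for B
    by (rule inclusion_exclusion_symmetric[of G h]) (simp_all add: G_def)
  then show ?thesis unfolding m_def by metis
qed

lemma max_neg_ind:
  assumes "A \<noteq> {}"
  shows "Max ((- ind B) ` (A::'n::finite set)) = (if A \<subseteq> B then -1 else (0::real))"
proof (cases "A \<subseteq> B")
  case True
  then have "(- ind B) ` A = {-1}" using assms by (auto simp: ind_def)
  then show ?thesis using True by simp
next
  case False
  then obtain i where i: "i \<in> A" "i \<notin> B" by auto
  have "Max ((- ind B) ` A) = 0"
    by (rule Max_eqI) (use i in \<open>auto simp: ind_def\<close>)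
  then show ?thesis using False by simp
qed

lemma max_sector:
  fixes x :: "'n::finite \<Rightarrow> real"
  assumes p: "is_perm \<sigma>" and s: "in_sector \<sigma> x" and A: "A \<noteq> {}"
  shows "Max (x ` A) = x (\<sigma> (Max {l\<in>{1..CARD('n)}. \<sigma> l \<in> A}))"
proof -
  define S where "S = {l\<in>{1..CARD('n)}. \<sigma> l \<in> A}"
  have fS: "finite S" unfolding S_def by simp
  obtain i where "i \<in> A" using A by auto
  then obtain l where "l \<in> {1..CARD('n)}" "\<sigma> l = i" using perm_surj[OF p] by (metis imageE UNIV_I)
  then have neS: "S \<noteq> {}" using \<open>i \<in> A\<close> unfolding S_def by auto
  have MS: "Max S \<in> S" using Max_in[OF fS neS] .
  show ?thesis unfolding S_def[symmetric]
  proof (rule Max_eqI)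
    show "finite (x ` A)" by simp
    show "x (\<sigma> (Max S)) \<in> x ` A" using MS unfolding S_def by auto
    fix y assume "y \<in> x ` A"
    then obtain j where j: "j \<in> A" "y = x j" by auto
    then obtain l where l: "l \<in> {1..CARD('n)}" "\<sigma> l = j" using perm_surj[OF p] by (metis imageE UNIV_I)
    then have "l \<in> S" using j unfolding S_def by auto
    then have "l \<le> Max S" using fS by simp
    moreover have "Max S \<le> CARD('n)" using MS unfolding S_def by auto
    ultimately show "y \<le> x (\<sigma> (Max S))" using s l j unfolding in_sector_def by auto
  qed
qed

lemma lovasz_exists:
  fixes g :: "'n::finite set \<Rightarrow> real"
  shows "\<exists>L. sector_affine L \<and> (\<forall>A. L (- ind A) = g A)"
proof -
  obtain m where m: "\<And>B. (\<Sum>A\<in>Pow B. m A) = g {} - g B"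
    using mobius_exists[of "\<lambda>B. g {} - g B"] by blast
  have m0: "m {} = 0" using m[of "{}"] by simp
  define L where "L x = g {} + (\<Sum>A\<in>UNIV. m A * Max (x ` A))" for x :: "'n \<Rightarrow> real"
  have "L (- ind B) = g B" for B
  proof -
    have "(\<Sum>A\<in>UNIV. m A * Max ((- ind B) ` A)) = (\<Sum>A\<in>UNIV. - (if A \<in> Pow B then m A else 0))"
    proof (rule sum.cong[OF refl])
      fix A :: "'n set"
      show "m A * Max ((- ind B) ` A) = - (if A \<in> Pow B then m A else 0)"
        using max_neg_ind[of A B] m0 by (cases "A = {}") auto
    qed
    also have "\<dots> = - (\<Sum>A\<in>Pow B. m A)"
      using sum.inter_restrict[of UNIV m "Pow B"] by (simp add: sum_negf)
    finally show ?thesis unfolding L_def using m[of B] by simp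
  qed
  moreover have "sector_affine L"
    unfolding sector_affine_def
  proof (intro allI impI)
    fix \<sigma> :: "nat \<Rightarrow> 'n" assume p: "is_perm \<sigma>"
    define j where "j A = \<sigma> (Max {l\<in>{1..CARD('n)}. \<sigma> l \<in> A})" for A
    define a where "a i = (\<Sum>A\<in>UNIV. if j A = i then m A else 0)" for i
    show "\<exists>c a. \<forall>x. in_sector \<sigma> x \<longrightarrow> L x = c + (\<Sum>i\<in>UNIV. a i * x i)"
    proof (intro exI allI impI)
      fix x :: "'n \<Rightarrow> real" assume s: "in_sector \<sigma> x"
      have "(\<Sum>A\<in>UNIV. m A * Max (x ` A)) = (\<Sum>A\<in>UNIV. \<Sum>i\<in>UNIV. (if j A = i then m A else 0) * x i)"
      proof (rule sum.cong[OF refl])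
        fix A :: "'n set"
        have "(\<Sum>i\<in>UNIV. (if j A = i then m A else 0) * x i) = m A * x (j A)"
          proof -
          have "(\<Sum>i\<in>UNIV. (if j A = i then m A else 0) * x i) = (\<Sum>i\<in>UNIV. if j A = i then m A * x i else 0)"
            by (rule sum.cong) auto
          then show ?thesis by simp
        qed
        moreover have "m A * Max (x ` A) = m A * x (j A)"
          using max_sector[OF p s, of A] m0 unfolding j_def by (cases "A = {}") auto
        ultimately show "m A * Max (x ` A) = (\<Sum>i\<in>UNIV. (if j A = i then m A else 0) * x i)" by simp
      qed
      also have "\<dots> = (\<Sum>i\<in>UNIV. a i * x i)"
        unfolding a_def sum_distrib_right by (rule sum.swap)
      finally show "L x = g {} + (\<Sum>i\<in>UNIV. a i * x i)" unfolding L_def by simp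
    qed
  qed
  ultimately show ?thesis by blast
qed

lemma lovasz_minus_props:
  fixes f :: "('n::finite \<Rightarrow> real) \<Rightarrow> real"
  shows "sector_affine (lovasz_minus f) \<and> (\<forall>A. lovasz_minus f (- ind A) = f (- ind A))"
proof -
  have ex1: "\<exists>!L. is_lovasz L \<and> (\<forall>A. L (- ind A) = f (- ind A))"
  proof -
    obtain L where L: "sector_affine L" "\<forall>A. L (- ind A) = f (- ind A)"
      using lovasz_exists[of "\<lambda>A. f (- ind A)"] by blast
    show ?thesis
    proof (rule ex1I[of _ L])
      show "is_lovasz L \<and> (\<forall>A. L (- ind A) = f (- ind A))" using L is_lovasz_iff by blast
      fix L' assume "is_lovasz L' \<and> (\<forall>A. L' (- ind A) = f (- ind A))"
      then show "L' = L" using lovasz_unique[of L' L] L is_lovasz_iff by metis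
    qed
  qed
  show ?thesis using theI'[OF ex1] unfolding lovasz_minus_def is_lovasz_iff by blast
qed


subsection \<open>Sector and cube closure\<close>

lemma sector_comp:
  assumes "in_sector \<sigma> x" "x \<in> cube I" "mono_on I \<phi>"
  shows "in_sector \<sigma> (\<lambda>i. \<phi> (x i))"
  using assms unfolding in_sector_def cube_def by (auto intro: mono_onD)

lemma sector_min:
  assumes "in_sector \<sigma> x" "in_sector \<sigma> x'"
  shows "in_sector \<sigma> (\<lambda>i. min (x i) (x' i))"
  using assms unfolding in_sector_def by (metis min.mono)

lemma sector_max:
  assumes "in_sector \<sigma> x" "in_sector \<sigma> x'"
  shows "in_sector \<sigma> (\<lambda>i. max (x i) (x' i))"
  using assms unfolding in_sector_def by (metis max.mono)

lemma sector_maxc: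
  assumes "in_sector \<sigma> x"
  shows "in_sector \<sigma> (maxc x c)"
  using assms unfolding in_sector_def maxc_def by (metis max.mono order_refl)

lemma sector_cutc:
  assumes "in_sector \<sigma> x" "\<forall>i. x i \<le> 0"
  shows "in_sector \<sigma> (cutc c x)"
  unfolding in_sector_def cutc_def
proof (intro allI impI)
  fix i j assume h: "1 \<le> i" "i \<le> j" "j \<le> CARD('a)"
  then have "x (\<sigma> i) \<le> x (\<sigma> j)" using assms(1) unfolding in_sector_def by auto
  then show "(if c \<le> x (\<sigma> i) then 0 else x (\<sigma> i)) \<le> (if c \<le> x (\<sigma> j) then 0 else x (\<sigma> j))"
    using assms(2) by auto
qed

lemma cube_le0: "I \<subseteq> {..0} \<Longrightarrow> x \<in> cube I \<Longrightarrow> x i \<le> 0"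
  unfolding cube_def by auto

lemma cube_maxc: "x \<in> cube I \<Longrightarrow> c \<in> I \<Longrightarrow> maxc x c \<in> cube I"
  unfolding cube_def maxc_def by (auto simp: max_def)

lemma cube_cutc: "x \<in> cube I \<Longrightarrow> 0 \<in> I \<Longrightarrow> cutc c x \<in> cube I"
  unfolding cube_def cutc_def by auto

lemma cube_min: "x \<in> cube I \<Longrightarrow> x' \<in> cube I \<Longrightarrow> (\<lambda>i. min (x i) (x' i)) \<in> cube I"
  unfolding cube_def by (auto simp: min_def)

lemma cube_max: "x \<in> cube I \<Longrightarrow> x' \<in> cube I \<Longrightarrow> (\<lambda>i. max (x i) (x' i)) \<in> cube I"
  unfolding cube_def by (auto simp: max_def)

lemma CM_HM:
  fixes f :: "('n::finite \<Rightarrow> real) \<Rightarrow> real"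
  assumes I0: "I \<subseteq> {..0}" "0 \<in> I" and cm: "comon_modular I f"
  shows "inv_hmaxdiff I f"
  unfolding inv_hmaxdiff_def
proof (intro ballI)
  fix x :: "'n \<Rightarrow> real" and c assume x: "x \<in> cube I" and c: "c \<in> I"
  have xl: "\<forall>i. x i \<le> 0" using cube_le0[OF I0(1) x] by blast
  have cl: "c \<le> 0" using c I0 by auto
  obtain \<sigma> where p: "is_perm \<sigma>" and s: "in_sector \<sigma> x" using sort_exists by blast
  have "comonotonic I (maxc x c) (cutc c x)"
    unfolding comonotonic_def
    using cube_maxc[OF x c] cube_cutc[OF x I0(2)] p sector_maxc[OF s] sector_cutc[OF s xl] by blast
  then have e: "f (maxc x c) + f (cutc c x) = f (\<lambda>i. min (maxc x c i) (cutc c x i)) + f (\<lambda>i. max (maxc x c i) (cutc c x i))"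
    using cm unfolding comon_modular_def by blast
  have "(\<lambda>i. min (maxc x c i) (cutc c x i)) = x"
    using xl cl unfolding maxc_def cutc_def by (auto simp: min_def max_def)
  moreover have "(\<lambda>i. max (maxc x c i) (cutc c x i)) = maxc (cutc c x) c"
    using xl cl unfolding maxc_def cutc_def by (auto simp: min_def max_def)
  ultimately show "f x - f (maxc x c) = f (cutc c x) - f (maxc (cutc c x) c)" using e by simp
qed

subsection \<open>The representation\<close>

definition Rf :: "(('n::finite \<Rightarrow> real) \<Rightarrow> real) \<Rightarrow> (real \<Rightarrow> real) \<Rightarrow> (nat \<Rightarrow> 'n) \<Rightarrow> ('n \<Rightarrow> real) \<Rightarrow> real" where
  "Rf f \<phi> \<sigma> y = f (\<lambda>_. 0) - (\<Sum>l=1..CARD('n). \<phi> (y (\<sigma> l)) * (f0 f (- ind (Bd \<sigma> l)) - f0 f (- ind (Bd \<sigma> (l - 1)))))"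

definition whp :: "real set \<Rightarrow> (('n \<Rightarrow> real) \<Rightarrow> real) \<Rightarrow> (real \<Rightarrow> real) \<Rightarrow> bool" where
  "whp I f \<phi> \<longleftrightarrow> mono_on I \<phi> \<and> \<phi> 0 = 0 \<and>
      (\<forall>x\<in>I. \<forall>A. f0 f (\<lambda>i. x * ind A i) = - \<phi> x * f0 f (- ind A))"

lemma wh_iff: "weakly_homogeneous I (f0 f) \<longleftrightarrow> (\<exists>\<phi>. whp I f \<phi>)"
  unfolding weakly_homogeneous_def whp_def by blast

lemma R_comb:
  assumes "\<forall>i. \<phi> (y i) = \<phi> (u i) + \<phi> (v i) - \<phi> (w i)"
  shows "Rf f \<phi> \<sigma> y = Rf f \<phi> \<sigma> u + Rf f \<phi> \<sigma> v - Rf f \<phi> \<sigma> w"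
  unfolding Rf_def assms[rule_format] by (simp add: algebra_simps sum.distrib sum_subtractf)

lemma tele: "(\<Sum>l=1..(k::nat). F l - F (l - 1)) = F k - (F 0 :: real)"
  by (induction k) (simp_all add: sum.cl_ivl_Suc)

lemma R_zero: "\<phi> 0 = 0 \<Longrightarrow> Rf f \<phi> \<sigma> (\<lambda>_. 0) = f (\<lambda>_. 0)"
  unfolding Rf_def by simp


lemma sector_initial:
  fixes T :: "'n::finite set"
  assumes p: "is_perm \<sigma>" and c: "c < 0" and s: "in_sector \<sigma> (\<lambda>i. c * ind T i)"
  shows "\<exists>k\<le>CARD('n). T = Bd \<sigma> k"
proof -
  have dc: "\<sigma> i \<in> T" if "1 \<le> i" "i \<le> j" "j \<le> CARD('n)" "\<sigma> j \<in> T" for i j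
  proof (rule ccontr)
    assume "\<sigma> i \<notin> T"
    then have "c * ind T (\<sigma> i) = 0" "c * ind T (\<sigma> j) = c" using that(4) by (auto simp: ind_def)
    moreover have "c * ind T (\<sigma> i) \<le> c * ind T (\<sigma> j)" using s that unfolding in_sector_def by blast
    ultimately show False using c by simp
  qed
  define S where "S = {l\<in>{1..CARD('n)}. \<sigma> l \<in> T}"
  define k where "k = (if S = {} then 0 else Max S)"
  have fS: "finite S" unfolding S_def by simp
  have kn: "k \<le> CARD('n)" unfolding k_def using Max_in[OF fS] unfolding S_def by auto
  have "T = Bd \<sigma> k"
  proof
    show "T \<subseteq> Bd \<sigma> k"
    proof
      fix t assume t: "t \<in> T"
      then obtain l where l: "l \<in> {1..CARD('n)}" "\<sigma> l = t" using perm_surj[OF p] by (metis imageE UNIV_I)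
      then have "l \<in> S" using t unfolding S_def by auto
      then have "l \<le> k" using fS unfolding k_def by auto
      then show "t \<in> Bd \<sigma> k" using l unfolding Bd_def by auto
    qed
    show "Bd \<sigma> k \<subseteq> T"
    proof
      fix t assume "t \<in> Bd \<sigma> k"
      then obtain l where l: "l \<in> {1..k}" "t = \<sigma> l" unfolding Bd_def by auto
      then have "S \<noteq> {}" unfolding k_def by (auto split: if_splits)
      then have "k \<in> S" using Max_in[OF fS] unfolding k_def by simp
      then show "t \<in> T" using dc[of l k] l unfolding S_def by auto
    qed
  qed
  then show ?thesis using kn by blast
qed

lemma RT:
  fixes f :: "('n::finite \<Rightarrow> real) \<Rightarrow> real"
  assumes w: "whp I f \<phi>" and cI: "c \<in> I" and c: "c < 0" and p: "is_perm \<sigma>"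
    and s: "in_sector \<sigma> (\<lambda>i. c * ind T i)"
  shows "f (\<lambda>i. c * ind T i) = Rf f \<phi> \<sigma> (\<lambda>i. c * ind T i)"
proof -
  obtain k where kn: "k \<le> CARD('n)" and T: "T = Bd \<sigma> k" using sector_initial[OF p c s] by blast
  have phi0: "\<phi> 0 = 0" using w unfolding whp_def by blast
  define \<psi> where "\<psi> B = f0 f (- ind B)" for B
  have "(\<Sum>l=1..CARD('n). \<phi> (c * ind T (\<sigma> l)) * (\<psi> (Bd \<sigma> l) - \<psi> (Bd \<sigma> (l - 1))))
      = (\<Sum>l\<in>{1..CARD('n)}. if l \<in> {1..k} then \<phi> c * (\<psi> (Bd \<sigma> l) - \<psi> (Bd \<sigma> (l - 1))) else 0)"
  proof (rule sum.cong[OF refl])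
    fix l assume "l \<in> {1..CARD('n)}"
    then show "\<phi> (c * ind T (\<sigma> l)) * (\<psi> (Bd \<sigma> l) - \<psi> (Bd \<sigma> (l - 1))) =
      (if l \<in> {1..k} then \<phi> c * (\<psi> (Bd \<sigma> l) - \<psi> (Bd \<sigma> (l - 1))) else 0)"
      using ind_Bd[OF p kn, of l] phi0 unfolding T by auto
  qed
  also have "\<dots> = (\<Sum>l\<in>{1..k}. \<phi> c * (\<psi> (Bd \<sigma> l) - \<psi> (Bd \<sigma> (l - 1))))"
    using sum.inter_restrict[of "{1..CARD('n)}" "\<lambda>l. \<phi> c * (\<psi> (Bd \<sigma> l) - \<psi> (Bd \<sigma> (l - 1)))" "{1..k}"] kn
    by (simp add: Int_absorb1)
  also have "\<dots> = \<phi> c * (\<psi> (Bd \<sigma> k) - \<psi> (Bd \<sigma> 0))"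
    using tele[of "\<lambda>l. \<psi> (Bd \<sigma> l)" k] by (simp add: sum_distrib_left[symmetric])
  also have "\<psi> (Bd \<sigma> 0) = 0" unfolding \<psi>_def Bd_def f0_def by (simp add: neg_ind_empty)
  finally have e: "(\<Sum>l=1..CARD('n). \<phi> (c * ind T (\<sigma> l)) * (\<psi> (Bd \<sigma> l) - \<psi> (Bd \<sigma> (l - 1)))) = \<phi> c * \<psi> T"
    unfolding T by simp
  have "f0 f (\<lambda>i. c * ind T i) = - \<phi> c * \<psi> T" using w cI unfolding whp_def \<psi>_def by blast
  then show ?thesis using e unfolding Rf_def \<psi>_def f0_def by simp
qed

lemma HM_REP:
  fixes f :: "('n::finite \<Rightarrow> real) \<Rightarrow> real"
  assumes I0: "I \<subseteq> {..0}" "0 \<in> I" and hm: "inv_hmaxdiff I f" and w: "whp I f \<phi>"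
    and p: "is_perm \<sigma>"
  shows "y \<in> cube I \<Longrightarrow> in_sector \<sigma> y \<Longrightarrow> f y = Rf f \<phi> \<sigma> y"
proof (induction "card {i. y i \<noteq> 0}" arbitrary: y rule: less_induct)
  case less
  have phi0: "\<phi> 0 = 0" using w unfolding whp_def by blast
  have yl: "\<forall>i. y i \<le> 0" using cube_le0[OF I0(1) less.prems(1)] by blast
  define N where "N = {i. y i \<noteq> 0}"
  show ?case
  proof (cases "N = {}")
    case True
    then have "y = (\<lambda>_. 0)" unfolding N_def by auto
    then show ?thesis using R_zero[of \<phi> f \<sigma>] phi0 by simp
  next
    case False
    define c where "c = Max (y ` N)"
    have fN: "finite N" by simp
    have "c \<in> y ` N" unfolding c_def using False fN by simp
    then obtain i0 where i0: "i0 \<in> N" "y i0 = c" by auto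
    have cI: "c \<in> I" using less.prems(1) i0 unfolding cube_def by auto
    have c0: "c < 0" using i0 yl unfolding N_def by (metis less_eq_real_def mem_Collect_eq)
    have yc: "y i \<le> c" if "i \<in> N" for i unfolding c_def using that fN by simp
    have e1: "maxc y c = (\<lambda>i. c * ind N i)"
      using yc yl c0 unfolding maxc_def ind_def N_def by (auto simp: max_def)
    have e2: "maxc (cutc c y) c = (\<lambda>i. c * ind {i. y i < c} i)"
      using c0 unfolding maxc_def cutc_def ind_def by (auto simp: max_def)
    have cut_cube: "cutc c y \<in> cube I" using cube_cutc[OF less.prems(1) I0(2)] .
    have cut_sec: "in_sector \<sigma> (cutc c y)" using sector_cutc[OF less.prems(2) yl] .
    have "{i. cutc c y i \<noteq> 0} \<subset> {i. y i \<noteq> 0}"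
    proof
      show "{i. cutc c y i \<noteq> 0} \<subseteq> {i. y i \<noteq> 0}" unfolding cutc_def by auto
      show "{i. cutc c y i \<noteq> 0} \<noteq> {i. y i \<noteq> 0}"
        using i0 unfolding cutc_def N_def by auto
    qed
    then have "card {i. cutc c y i \<noteq> 0} < card {i. y i \<noteq> 0}"
      by (rule psubset_card_mono[rotated]) simp
    then have IH: "f (cutc c y) = Rf f \<phi> \<sigma> (cutc c y)"
      using less.hyps cut_cube cut_sec by blast
    have s1: "in_sector \<sigma> (\<lambda>i. c * ind N i)" using sector_maxc[OF less.prems(2), of c] e1 by simp
    have s2: "in_sector \<sigma> (\<lambda>i. c * ind {i. y i < c} i)"
      using sector_maxc[OF cut_sec, of c] e2 by simp
    have h: "f y - f (maxc y c) = f (cutc c y) - f (maxc (cutc c y) c)"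
      using hm less.prems(1) cI unfolding inv_hmaxdiff_def by blast
    have R: "Rf f \<phi> \<sigma> y = Rf f \<phi> \<sigma> (maxc y c) + Rf f \<phi> \<sigma> (cutc c y) - Rf f \<phi> \<sigma> (maxc (cutc c y) c)"
      by (rule R_comb) (use phi0 c0 in \<open>auto simp: maxc_def cutc_def max_def\<close>)
    show ?thesis
      using h R IH RT[OF w cI c0 p s1] RT[OF w cI c0 p s2] e1 e2 by simp
  qed
qed

lemma REP_CM:
  fixes f :: "('n::finite \<Rightarrow> real) \<Rightarrow> real"
  assumes rep: "\<And>\<sigma> y. is_perm \<sigma> \<Longrightarrow> y \<in> cube I \<Longrightarrow> in_sector \<sigma> y \<Longrightarrow> f y = Rf f \<phi> \<sigma> y"
  shows "comon_modular I f"
  unfolding comon_modular_def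
proof (intro allI impI)
  fix x x' :: "'n \<Rightarrow> real" assume "comonotonic I x x'"
  then obtain \<sigma> where x: "x \<in> cube I" and x': "x' \<in> cube I" and p: "is_perm \<sigma>"
    and s: "in_sector \<sigma> x" and s': "in_sector \<sigma> x'" unfolding comonotonic_def by blast
  have "Rf f \<phi> \<sigma> x = Rf f \<phi> \<sigma> (\<lambda>i. min (x i) (x' i)) + Rf f \<phi> \<sigma> (\<lambda>i. max (x i) (x' i)) - Rf f \<phi> \<sigma> x'"
    by (rule R_comb) (auto simp: min_def max_def)
  then show "f x + f x' = f (\<lambda>i. min (x i) (x' i)) + f (\<lambda>i. max (x i) (x' i))"
    using rep[OF p x s] rep[OF p x' s'] rep[OF p cube_min[OF x x'] sector_min[OF s s']]
      rep[OF p cube_max[OF x x'] sector_max[OF s s']] by simp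
qed


lemma neg_ind_eq: "(\<lambda>i. (-1) * ind A i) = (- ind A :: 'n \<Rightarrow> real)"
  by (rule ext) simp

lemma HM_REP_all:
  fixes f :: "('n::finite \<Rightarrow> real) \<Rightarrow> real"
  assumes I0: "I \<subseteq> {..0}" "0 \<in> I" and hm: "inv_hmaxdiff I f" and w: "whp I f \<phi>"
  shows "\<And>\<sigma> y. is_perm \<sigma> \<Longrightarrow> y \<in> cube I \<Longrightarrow> in_sector \<sigma> y \<Longrightarrow> f y = Rf f \<phi> \<sigma> y"
  using HM_REP[OF I0 hm w] by blast

lemma REP_nonconst:
  fixes f :: "('n::finite \<Rightarrow> real) \<Rightarrow> real"
  assumes rep: "\<And>\<sigma> y. is_perm \<sigma> \<Longrightarrow> y \<in> cube I \<Longrightarrow> in_sector \<sigma> y \<Longrightarrow> f y = Rf f \<phi> \<sigma> y"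
    and nc: "\<exists>x\<in>cube I. \<exists>y\<in>cube I. f x \<noteq> f y"
  shows "\<exists>A. f0 f (- ind A) \<noteq> 0"
proof (rule ccontr)
  assume "\<not> ?thesis"
  then have z: "\<forall>A. f0 f (- ind A) = 0" by blast
  have "f x = f (\<lambda>_. 0)" if x: "x \<in> cube I" for x
  proof -
    obtain \<sigma> where p: "is_perm \<sigma>" and s: "in_sector \<sigma> x" using sort_exists by blast
    show ?thesis using rep[OF p x s] z unfolding Rf_def by simp
  qed
  then show False using nc by metis
qed

lemma P2_P3:
  fixes f :: "('n::finite \<Rightarrow> real) \<Rightarrow> real"
  assumes I1: "{-1..0} \<subseteq> I" and I0: "I \<subseteq> {..0}"
    and nc: "\<exists>x\<in>cube I. \<exists>y\<in>cube I. f x \<noteq> f y"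
    and hm: "inv_hmaxdiff I f" and wh: "weakly_homogeneous I (f0 f)"
  shows "\<exists>\<phi>. mono_on I \<phi> \<and> \<phi> 0 = 0 \<and> \<phi> (-1) = -1 \<and>
                   (\<forall>x\<in>cube I. f x = lovasz_minus f (\<lambda>i. \<phi> (x i)))"
proof -
  have z: "0 \<in> I" and m1: "-1 \<in> I" using I1 by auto
  obtain \<phi> where w: "whp I f \<phi>" using wh wh_iff by blast
  have mono: "mono_on I \<phi>" and phi0: "\<phi> 0 = 0"
    and W: "\<forall>x\<in>I. \<forall>A. f0 f (\<lambda>i. x * ind A i) = - \<phi> x * f0 f (- ind A)"
    using w unfolding whp_def by blast+
  note rep = HM_REP_all[OF I0 z hm w]
  obtain A where A: "f0 f (- ind A) \<noteq> 0" using REP_nonconst[OF rep nc] by blast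
  have "f0 f (- ind A) = - \<phi> (-1) * f0 f (- ind A)"
    using W m1 neg_ind_eq[of A] by metis
  then have phim1: "\<phi> (-1) = -1" using A
    by (metis mult_cancel_right2 minus_equation_iff)
  define L where "L = lovasz_minus f"
  have saL: "sector_affine L" and LA: "\<forall>A. L (- ind A) = f (- ind A)"
    using lovasz_minus_props[of f] unfolding L_def by blast+
  have L0: "L (\<lambda>_. 0) = f (\<lambda>_. 0)" using LA[rule_format, of "{}"] by (simp add: neg_ind_empty)
  have "f x = L (\<lambda>i. \<phi> (x i))" if x: "x \<in> cube I" for x
  proof -
    obtain \<sigma> where p: "is_perm \<sigma>" and s: "in_sector \<sigma> x" using sort_exists by blast
    have "L (\<lambda>i. \<phi> (x i)) = L (\<lambda>_. 0) - (\<Sum>l=1..CARD('n). (L (- ind (Bd \<sigma> l)) - L (- ind (Bd \<sigma> (l - 1)))) * \<phi> (x (\<sigma> l)))"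
      using RL[OF saL p sector_comp[OF s x mono]] by simp
    also have "\<dots> = Rf f \<phi> \<sigma> x"
      unfolding Rf_def L0 f0_def by (simp add: mult.commute LA)
    finally show ?thesis using rep[OF p x s] by simp
  qed
  then show ?thesis using mono phi0 phim1 unfolding L_def by blast
qed

lemma P3_P1:
  fixes f :: "('n::finite \<Rightarrow> real) \<Rightarrow> real"
  assumes I1: "{-1..0} \<subseteq> I" and I0: "I \<subseteq> {..0}"
    and nc: "\<exists>x\<in>cube I. \<exists>y\<in>cube I. f x \<noteq> f y"
    and P3: "mono_on I \<phi>" "\<phi> 0 = 0" "\<forall>x\<in>cube I. f x = lovasz_minus f (\<lambda>i. \<phi> (x i))"
  shows "quasi_lovasz I f \<and> (\<exists>A. f0 f (- ind A) \<noteq> 0)"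
proof -
  define L where "L = lovasz_minus f"
  have saL: "sector_affine L" and LA: "\<forall>A. L (- ind A) = f (- ind A)"
    using lovasz_minus_props[of f] unfolding L_def by blast+
  have L0: "L (\<lambda>_. 0) = f (\<lambda>_. 0)" using LA[rule_format, of "{}"] by (simp add: neg_ind_empty)
  have q: "quasi_lovasz I f" unfolding quasi_lovasz_def
    using saL is_lovasz_iff P3 unfolding L_def by blast
  have "\<exists>A. f0 f (- ind A) \<noteq> 0"
  proof (rule ccontr)
    assume "\<not> ?thesis"
    then have z: "\<forall>A. L (- ind A) = f (\<lambda>_. 0)" using LA unfolding f0_def by simp
    have "f x = f (\<lambda>_. 0)" if x: "x \<in> cube I" for x
    proof -
      obtain \<sigma> where p: "is_perm \<sigma>" and s: "in_sector \<sigma> x" using sort_exists by blast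
      show ?thesis using RL[OF saL p sector_comp[OF s x P3(1)]] z L0 P3(3) x unfolding L_def by simp
    qed
    then show False using nc by metis
  qed
  then show ?thesis using q by blast
qed

lemma P1_P2:
  fixes f :: "('n::finite \<Rightarrow> real) \<Rightarrow> real"
  assumes I1: "{-1..0} \<subseteq> I" and I0: "I \<subseteq> {..0}"
    and q: "quasi_lovasz I f" and A: "\<exists>A. f0 f (- ind A) \<noteq> 0"
  shows "comon_modular I f \<and> weakly_homogeneous I (f0 f)"
proof -
  have z: "0 \<in> I" and m1: "-1 \<in> I" using I1 by auto
  obtain L \<phi> where L: "is_lovasz L" and mono: "mono_on I \<phi>" and phi0: "\<phi> 0 = 0"
    and fL: "\<forall>x\<in>cube I. f x = L (\<lambda>i. \<phi> (x i))"
    using q unfolding quasi_lovasz_def by blast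
  have saL: "sector_affine L" using L is_lovasz_iff by blast
  have zc: "(\<lambda>_. 0) \<in> cube I" using z unfolding cube_def by simp
  have f0L: "f (\<lambda>_. 0) = L (\<lambda>_. 0)" using fL[rule_format, OF zc] phi0 by simp
  have phil: "\<phi> x \<le> 0" if "x \<in> I" for x
    using mono_onD[OF mono that z] that I0 phi0 by auto
  have fx: "f0 f (\<lambda>i. x * ind A i) = - \<phi> x * (L (- ind A) - L (\<lambda>_. 0))" if x: "x \<in> I" for x A
  proof -
    have c: "(\<lambda>i. x * ind A i) \<in> cube I" using x z unfolding cube_def ind_def by auto
    have "(\<lambda>i. \<phi> (x * ind A i)) = (\<lambda>i. \<phi> x * ind A i)" by (rule ext) (simp add: ind_def phi0)
    then have "f (\<lambda>i. x * ind A i) = L (\<lambda>i. \<phi> x * ind A i)" using fL c by simp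
    then show ?thesis using LH[OF saL phil[OF x], of A] f0L unfolding f0_def by simp
  qed
  have fm1: "f0 f (- ind A) = - \<phi> (-1) * (L (- ind A) - L (\<lambda>_. 0))" for A
    using fx[OF m1, of A] neg_ind_eq[of A] by simp
  have pm1: "\<phi> (-1) < 0"
  proof -
    have "\<phi> (-1) \<le> 0" using phil m1 by blast
    moreover have "\<phi> (-1) \<noteq> 0" using A fm1 by auto
    ultimately show ?thesis by simp
  qed
  define \<phi>' where "\<phi>' x = - \<phi> x / \<phi> (-1)" for x
  have "whp I f \<phi>'"
    unfolding whp_def
  proof (intro conjI ballI allI)
    show "mono_on I \<phi>'"
    proof (rule mono_onI)
      fix r s assume "r \<in> I" "s \<in> I" "r \<le> s"
      then have "\<phi> r \<le> \<phi> s" using mono_onD[OF mono] by blast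
      then show "\<phi>' r \<le> \<phi>' s" unfolding \<phi>'_def using pm1 by (simp add: divide_right_mono_neg)
    qed
    show "\<phi>' 0 = 0" unfolding \<phi>'_def phi0 by simp
    fix x A assume "x \<in> I"
    then show "f0 f (\<lambda>i. x * ind A i) = - \<phi>' x * f0 f (- ind A)"
      unfolding fx[OF \<open>x \<in> I\<close>] fm1 \<phi>'_def using pm1 by (simp add: field_simps)
  qed
  then have wh: "weakly_homogeneous I (f0 f)" using wh_iff by blast
  have cm: "comon_modular I f"
    unfolding comon_modular_def
  proof (intro allI impI)
    fix x x' :: "'n \<Rightarrow> real" assume "comonotonic I x x'"
    then obtain \<sigma> where x: "x \<in> cube I" and x': "x' \<in> cube I" and p: "is_perm \<sigma>"
      and s: "in_sector \<sigma> x" and s': "in_sector \<sigma> x'" unfolding comonotonic_def by blast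
    obtain c a where ca: "\<forall>x. in_sector \<sigma> x \<longrightarrow> L x = c + (\<Sum>i\<in>UNIV. a i * x i)"
      using saL p unfolding sector_affine_def by blast
    define mn where "mn = (\<lambda>i. min (x i) (x' i))"
    define mx where "mx = (\<lambda>i. max (x i) (x' i))"
    have cmn: "mn \<in> cube I" "mx \<in> cube I" unfolding mn_def mx_def using cube_min[OF x x'] cube_max[OF x x'] by auto
    have smn: "in_sector \<sigma> mn" "in_sector \<sigma> mx" unfolding mn_def mx_def using sector_min[OF s s'] sector_max[OF s s'] by auto
    have ev: "f y = c + (\<Sum>i\<in>UNIV. a i * \<phi> (y i))" if "y \<in> cube I" "in_sector \<sigma> y" for y
      using fL ca sector_comp[OF that(2) that(1) mono] that(1) by simp
    have pw: "a i * \<phi> (x i) + a i * \<phi> (x' i) = a i * \<phi> (mn i) + a i * \<phi> (mx i)" for i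
      unfolding mn_def mx_def by (cases "x i \<le> x' i") (auto simp: min_def max_def)
    have "(\<Sum>i\<in>UNIV. a i * \<phi> (x i)) + (\<Sum>i\<in>UNIV. a i * \<phi> (x' i)) = (\<Sum>i\<in>UNIV. a i * \<phi> (mn i)) + (\<Sum>i\<in>UNIV. a i * \<phi> (mx i))"
      unfolding sum.distrib[symmetric] using pw by simp
    then show "f x + f x' = f (\<lambda>i. min (x i) (x' i)) + f (\<lambda>i. max (x i) (x' i))"
      using ev[OF x s] ev[OF x' s'] ev[OF cmn(1) smn(1)] ev[OF cmn(2) smn(2)] unfolding mn_def mx_def by simp
  qed
  show ?thesis using cm wh by blast
qed

theorem theorem16:
  fixes I :: "real set" and f :: "('n::finite \<Rightarrow> real) \<Rightarrow> real"
  assumes "is_interval I" and "{-1..0} \<subseteq> I" and "I \<subseteq> {..0}"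
    and "\<exists>x\<in>cube I. \<exists>y\<in>cube I. f x \<noteq> f y"
  shows "((quasi_lovasz I f \<and> (\<exists>A. f0 f (- ind A) \<noteq> 0))
            \<longleftrightarrow> (comon_modular I f \<and> weakly_homogeneous I (f0 f)))
       \<and> ((comon_modular I f \<and> weakly_homogeneous I (f0 f))
            \<longleftrightarrow> (inv_hmaxdiff I f \<and> weakly_homogeneous I (f0 f)))
       \<and> ((comon_modular I f \<and> weakly_homogeneous I (f0 f))
            \<longleftrightarrow> (\<exists>\<phi>. mono_on I \<phi> \<and> \<phi> 0 = 0 \<and> \<phi> (-1) = -1 \<and>
                   (\<forall>x\<in>cube I. f x = lovasz_minus f (\<lambda>i. \<phi> (x i)))))"
proof -
  have z: "0 \<in> I" using assms(2) by auto
  have P2_P2': "comon_modular I f \<and> weakly_homogeneous I (f0 f) \<Longrightarrow> inv_hmaxdiff I f \<and> weakly_homogeneous I (f0 f)"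
    using CM_HM[OF assms(3) z] by blast
  have P2'_P2: "inv_hmaxdiff I f \<and> weakly_homogeneous I (f0 f) \<Longrightarrow> comon_modular I f \<and> weakly_homogeneous I (f0 f)"
  proof -
    assume h: "inv_hmaxdiff I f \<and> weakly_homogeneous I (f0 f)"
    then obtain \<phi> where w: "whp I f \<phi>" using wh_iff by blast
    show ?thesis using REP_CM[OF HM_REP_all[OF assms(3) z _ w]] h by blast
  qed
  have P2_P3: "comon_modular I f \<and> weakly_homogeneous I (f0 f) \<Longrightarrow>
      (\<exists>\<phi>. mono_on I \<phi> \<and> \<phi> 0 = 0 \<and> \<phi> (-1) = -1 \<and> (\<forall>x\<in>cube I. f x = lovasz_minus f (\<lambda>i. \<phi> (x i))))"
    using P2_P3[OF assms(2,3,4)] P2_P2' by blast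
  have P3_P1: "(\<exists>\<phi>. mono_on I \<phi> \<and> \<phi> 0 = 0 \<and> \<phi> (-1) = -1 \<and> (\<forall>x\<in>cube I. f x = lovasz_minus f (\<lambda>i. \<phi> (x i))))
      \<Longrightarrow> quasi_lovasz I f \<and> (\<exists>A. f0 f (- ind A) \<noteq> 0)"
    using P3_P1[OF assms(2,3,4)] by blast
  have P1_P2: "quasi_lovasz I f \<and> (\<exists>A. f0 f (- ind A) \<noteq> 0) \<Longrightarrow> comon_modular I f \<and> weakly_homogeneous I (f0 f)"
    using P1_P2[OF assms(2,3)] by blast
  show ?thesis using P2_P2' P2'_P2 P2_P3 P3_P1 P1_P2 by blast
qed

end
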